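(* Let $h_C,h_A:S\to\mathbb R_{\ge0}\cup\{\infty\}$ be two admissible (static) heuristics for $\mathcal T$, and let $h_{\mathrm{lazy}}$ be the lazy evaluation heuristic over the information source $\sigma_{\mathrm{lazy}}$. Then Dynamic A* with \texttt{reeval} set to true using $h_{\mathrm{lazy}}$ returns optimal solutions: whenever it returns a path, it is a solution of $\mathcal T$ of minimal cost.
   Context: A transition system is $\mathcal T=\langle S,L,c,T,s_I,S_G\rangle$ with finite states $S$, finite labels $L$, cost function $c:L\to\mathbb R_{\ge0}$, transitions $T\subseteq S\times L\times S$, initial state $s_I$, goal states $S_G\subseteq S$; $h^*(s)$ is the minimal cost of a path from $s$ to a goal ($\infty$ if none). A static heuristic $h:S\to\mathbb R_{\ge0}\cup\{\infty\}$ is admissible if $h(s)\le h^*(s)$ for all $s$. An information source $\sigma$ consists of a set $\mathcal I_\sigma$, $\iota_0^\sigma\in\mathcal I_\sigma$, $\mathrm{update}_\sigma:\mathcal I_\sigma\times T\to\mathcal I_\sigma$, $\mathrm{refine}_\sigma:\mathcal I_\sigma\times S\to\mathcal I_\sigma$. A dynamic heuristic over $\sigma$ is a function $h:S\times\mathcal I_\sigma\to\mathbb R_{\ge0}\cup\{\infty\}$. The source $\sigma_{\mathrm{lazy}}$: $\mathcal I_{\sigma_{\mathrm{lazy}}}$ is the set of functions $\iota:S\to\{C,A\}$; $\iota_0=\{s\mapsto C\mid s\in S\}$; $\mathrm{update}(\iota,t)=\iota$; $\mathrm{refine}(\iota,s)=\iota'$ where $\iota'$ agrees with $\iota$ except $\iota'(s)=A$.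 The lazy evaluation heuristic is $h_{\mathrm{lazy}}(s,\iota)=h_{\iota(s)}(s)$. Parent source $\sigma_p$: $\mathcal I_{\sigma_p}$ = partial functions $S\rightharpoonup\mathbb R_{\ge0}\times(T\cup\{\bot\})$; $\iota_0=\{s_I\mapsto\langle0,\bot\rangle\}$; refine is the identity; $\mathrm{update}(\iota,\langle s,\ell,s'\rangle)$ with $\iota(s)=\langle g,\cdot\rangle$ changes only $s'$, setting it to $\langle g+c(\ell),\langle s,\ell,s'\rangle\rangle$ if $\iota(s')$ is undefined or has $g$-component $\ge g+c(\ell)$, otherwise unchanged. Dynamic A* takes $\mathcal T$, sources $\sigma_p,\sigma_h$, a dynamic heuristic $h$ over $\sigma_h$ and a Boolean flag \texttt{reeval}. Notation: at any moment $g(s)$ is the $g$-component of the current $\mathcal I(\sigma_p)(s)$ and $h(s)$ denotes $h(s,\mathcal I(\sigma_h))$ for the current $\mathcal I(\sigma_h)$. Open is a priority queue of entries $\langle s,g,h\rangle$ (duplicates allowed), popped by minimal stored value $g+h$ (ties arbitrary). Algorithm: 1. $\mathcal I(\sigma):=\iota_0^\sigma$ for both sources; $S_{\mathrm{known}}:=\{s_I\}$; Closed $:=\emptyset$; Open empty. If $h(s_I)<\infty$ insert $\langle s_I,g(s_I),h(s_I)\rangle$. 2. While Open is nonempty: pop an entry $\langle s,\hat g,\hat h\rangle$ of minimal $\hat g+\hat h$. If $s\in$ Closed, continue with the next iteration. Otherwise set $\mathcal I(\sigma):=\mathrm{refine}_\sigma(\mathcal I(\sigma),s)$ for both sources. If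 \texttt{reeval} is true and $\hat h<h(s)$: if $h(s)<\infty$ insert $\langle s,g(s),h(s)\rangle$; continue with the next iteration (this is a re-evaluation). Otherwise add $s$ to Closed ($s$ is expanded). If $s\in S_G$, return the path obtained by following the parent pointers of $\mathcal I(\sigma_p)$ from $s$ back to $s_I$. Otherwise, for each $t=\langle s,\ell,s'\rangle\in T$ in some order: let $old:=g(s')$ if $s'\in S_{\mathrm{known}}$ and undefined otherwise; set $\mathcal I(\sigma):=\mathrm{update}_\sigma(\mathcal I(\sigma),t)$ for both sources; add $s'$ to $S_{\mathrm{known}}$; if $h(s')=\infty$ skip $s'$; else if $old$ is undefined insert $\langle s',g(s'),h(s')\rangle$; else if $old>g(s')$, remove $s'$ from Closed if it is there (reopening) and insert $\langle s',g(s'),h(s')\rangle$. 3. Return "unsolvable". *)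

theory Defs
  imports Complex_Main "HOL-Library.Multiset" "HOL-Library.Extended_Nonnegative_Real"
begin

type_synonym ('s,'l) trans = "'s \<times> 'l \<times> 's"

record ('s,'l) tsys =
  St   :: "'s set"
  Lb   :: "'l set"
  cst  :: "'l \<Rightarrow> real"
  Tr   :: "('s,'l) trans set"
  sI   :: "'s"
  SG   :: "'s set"

definition ts_wf :: "('s,'l) tsys \<Rightarrow> bool" where
  "ts_wf ts \<longleftrightarrow> finite (St ts) \<and> finite (Lb ts) \<and> (\<forall>l\<in>Lb ts. cst ts l \<ge> 0)
     \<and> Tr ts \<subseteq> St ts \<times> Lb ts \<times> St ts \<and> sI ts \<in> St ts \<and> SG ts \<subseteq> St ts"

fun is_path :: "('s,'l) tsys \<Rightarrow> 's \<Rightarrow> ('s,'l) trans list \<Rightarrow> 's \<Rightarrow> bool" where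
  "is_path ts s [] s' \<longleftrightarrow> s = s'"
| "is_path ts s (t # p) s' \<longleftrightarrow> t \<in> Tr ts \<and> fst t = s \<and> is_path ts (snd (snd t)) p s'"

definition path_cost :: "('s,'l) tsys \<Rightarrow> ('s,'l) trans list \<Rightarrow> real" where
  "path_cost ts p = sum_list (map (\<lambda>(_, l, _). cst ts l) p)"

definition goal_path :: "('s,'l) tsys \<Rightarrow> 's \<Rightarrow> ('s,'l) trans list \<Rightarrow> bool" where
  "goal_path ts s p \<longleftrightarrow> (\<exists>g\<in>SG ts. is_path ts s p g)"

definition is_solution :: "('s,'l) tsys \<Rightarrow> ('s,'l) trans list \<Rightarrow> bool" where
  "is_solution ts p \<longleftrightarrow> goal_path ts (sI ts) p"

(* h*(s): minimal cost of a path from s to a goal; \<infinity> (= top) if none *)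
definition hstar :: "('s,'l) tsys \<Rightarrow> 's \<Rightarrow> ennreal" where
  "hstar ts s = (INF p \<in> {p. goal_path ts s p}. ennreal (path_cost ts p))"

definition admissible :: "('s,'l) tsys \<Rightarrow> ('s \<Rightarrow> ennreal) \<Rightarrow> bool" where
  "admissible ts h \<longleftrightarrow> (\<forall>s\<in>St ts. h s \<le> hstar ts s)"

record ('s,'l,'i) info_source =
  iinit   :: "'i"
  iupdate :: "'i \<Rightarrow> ('s,'l) trans \<Rightarrow> 'i"
  irefine :: "'i \<Rightarrow> 's \<Rightarrow> 'i"

(* Parent source sigma_p: partial map S -> R>=0 x (T + bot); None in the 2nd component is bot *)
type_synonym ('s,'l) pinfo = "'s \<Rightarrow> (real \<times> ('s,'l) trans option) option"

definition p_init :: "('s,'l) tsys \<Rightarrow> ('s,'l) pinfo" where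
  "p_init ts = Map.empty(sI ts \<mapsto> (0, None))"

definition p_update :: "('s,'l) tsys \<Rightarrow> ('s,'l) pinfo \<Rightarrow> ('s,'l) trans \<Rightarrow> ('s,'l) pinfo" where
  "p_update ts \<iota> t = (case t of (s, l, s') \<Rightarrow>
     (case \<iota> s of None \<Rightarrow> \<iota>
      | Some (g, _) \<Rightarrow>
          (case \<iota> s' of None \<Rightarrow> \<iota>(s' \<mapsto> (g + cst ts l, Some t))
           | Some (g', _) \<Rightarrow> if g' \<ge> g + cst ts l then \<iota>(s' \<mapsto> (g + cst ts l, Some t)) else \<iota>)))"

definition p_refine :: "('s,'l) pinfo \<Rightarrow> 's \<Rightarrow> ('s,'l) pinfo" where
  "p_refine \<iota> s = \<iota>"

definition sigma_p :: "('s,'l) tsys \<Rightarrow> ('s,'l,('s,'l) pinfo) info_source" where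
  "sigma_p ts = \<lparr>iinit = p_init ts, iupdate = p_update ts, irefine = p_refine\<rparr>"

definition gval :: "('s,'l) pinfo \<Rightarrow> 's \<Rightarrow> real" where
  "gval \<iota> s = fst (the (\<iota> s))"

inductive parent_path :: "('s,'l) tsys \<Rightarrow> ('s,'l) pinfo \<Rightarrow> 's \<Rightarrow> ('s,'l) trans list \<Rightarrow> bool"
  for ts \<iota> where
  pp_init: "parent_path ts \<iota> (sI ts) []"
| pp_step: "\<lbrakk> s \<noteq> sI ts; \<iota> s = Some (g, Some (u, l, s)); parent_path ts \<iota> u p \<rbrakk>
            \<Longrightarrow> parent_path ts \<iota> s (p @ [(u, l, s)])"

datatype lazy_tag = C | A

definition sigma_lazy :: "('s,'l,'s \<Rightarrow> lazy_tag) info_source" where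
  "sigma_lazy = \<lparr>iinit = (\<lambda>s. C), iupdate = (\<lambda>\<iota> t. \<iota>), irefine = (\<lambda>\<iota> s. \<iota>(s := A))\<rparr>"

definition h_lazy :: "('s \<Rightarrow> ennreal) \<Rightarrow> ('s \<Rightarrow> ennreal) \<Rightarrow> 's \<Rightarrow> ('s \<Rightarrow> lazy_tag) \<Rightarrow> ennreal" where
  "h_lazy hC hA s \<iota> = (case \<iota> s of C \<Rightarrow> hC s | A \<Rightarrow> hA s)"

type_synonym ('s) entry = "'s \<times> real \<times> ennreal"

definition ekey :: "'s entry \<Rightarrow> ennreal" where
  "ekey e = (case e of (s, g, h) \<Rightarrow> ennreal g + h)"

record ('s,'l,'i) astate =
  Ip     :: "('s,'l) pinfo"
  Ih     :: "'i"
  known  :: "'s set"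
  closed :: "'s set"
  opn    :: "'s entry multiset"

datatype ('s,'l) result = Solution "('s,'l) trans list" | Unsolvable

datatype ('s,'l,'i) conf =
    Loop "('s,'l,'i) astate"
  | Succ "('s,'l,'i) astate" "('s,'l) trans set"   (* processing the remaining outgoing transitions *)
  | Ret "('s,'l) result"

definition astar_init :: "('s,'l) tsys \<Rightarrow> ('s,'l,'i) info_source \<Rightarrow> ('s \<Rightarrow> 'i \<Rightarrow> ennreal)
    \<Rightarrow> ('s,'l,'i) conf" where
  "astar_init ts \<sigma> h = Loop \<lparr>Ip = iinit (sigma_p ts), Ih = iinit \<sigma>, known = {sI ts}, closed = {},
     opn = (if h (sI ts) (iinit \<sigma>) < top
            then (add_mset (sI ts, gval (iinit (sigma_p ts)) (sI ts), h (sI ts) (iinit \<sigma>)) {#}) else {#})\<rparr>"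

definition succ_step :: "('s,'l) tsys \<Rightarrow> ('s,'l,'i) info_source \<Rightarrow> ('s \<Rightarrow> 'i \<Rightarrow> ennreal)
    \<Rightarrow> ('s,'l,'i) astate \<Rightarrow> ('s,'l) trans \<Rightarrow> ('s,'l,'i) astate" where
  "succ_step ts \<sigma> h st t = (let s' = snd (snd t);
      old = (if s' \<in> known st then Some (gval (Ip st) s') else None);
      ip' = iupdate (sigma_p ts) (Ip st) t;
      ih' = iupdate \<sigma> (Ih st) t;
      st' = st\<lparr>Ip := ip', Ih := ih', known := insert s' (known st)\<rparr>;
      hv = h s' ih'
    in if hv = top then st'
       else (case old of
               None \<Rightarrow> st'\<lparr>opn := opn st' + (add_mset (s', gval ip' s', hv) {#})\<rparr>
             | Some go \<Rightarrow> if go > gval ip' s'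
                 then st'\<lparr>closed := closed st' - {s'}, opn := opn st' + (add_mset (s', gval ip' s', hv) {#})\<rparr>
                 else st'))"

inductive astar_step :: "('s,'l) tsys \<Rightarrow> ('s,'l,'i) info_source \<Rightarrow> ('s \<Rightarrow> 'i \<Rightarrow> ennreal) \<Rightarrow> bool
    \<Rightarrow> ('s,'l,'i) conf \<Rightarrow> ('s,'l,'i) conf \<Rightarrow> bool"
  for ts \<sigma> h reeval where
  pop_closed:
    "\<lbrakk> e \<in># opn st; \<forall>e'\<in>#opn st. ekey e \<le> ekey e'; fst e \<in> closed st \<rbrakk>
     \<Longrightarrow> astar_step ts \<sigma> h reeval (Loop st) (Loop (st\<lparr>opn := opn st - (add_mset e {#})\<rparr>))"
| reevaluate:
    "\<lbrakk> e = (s, g0, h0); e \<in># opn st; \<forall>e'\<in>#opn st. ekey e \<le> ekey e'; s \<notin> closed st;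
       ip' = irefine (sigma_p ts) (Ip st) s; ih' = irefine \<sigma> (Ih st) s;
       reeval; h0 < h s ih' \<rbrakk>
     \<Longrightarrow> astar_step ts \<sigma> h reeval (Loop st)
          (Loop (st\<lparr>Ip := ip', Ih := ih', opn := opn st - (add_mset e {#}) +
                   (if h s ih' < top then (add_mset (s, gval ip' s, h s ih') {#}) else {#})\<rparr>))"
| expand_goal:
    "\<lbrakk> e = (s, g0, h0); e \<in># opn st; \<forall>e'\<in>#opn st. ekey e \<le> ekey e'; s \<notin> closed st;
       ip' = irefine (sigma_p ts) (Ip st) s; ih' = irefine \<sigma> (Ih st) s;
       \<not> (reeval \<and> h0 < h s ih'); s \<in> SG ts; parent_path ts ip' s p \<rbrakk>
     \<Longrightarrow> astar_step ts \<sigma> h reeval (Loop st) (Ret (Solution p))"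
| expand:
    "\<lbrakk> e = (s, g0, h0); e \<in># opn st; \<forall>e'\<in>#opn st. ekey e \<le> ekey e'; s \<notin> closed st;
       ip' = irefine (sigma_p ts) (Ip st) s; ih' = irefine \<sigma> (Ih st) s;
       \<not> (reeval \<and> h0 < h s ih'); s \<notin> SG ts \<rbrakk>
     \<Longrightarrow> astar_step ts \<sigma> h reeval (Loop st)
          (Succ (st\<lparr>Ip := ip', Ih := ih', closed := insert s (closed st), opn := opn st - (add_mset e {#})\<rparr>)
                {t \<in> Tr ts. fst t = s})"
| succ:
    "t \<in> R \<Longrightarrow> astar_step ts \<sigma> h reeval (Succ st R) (Succ (succ_step ts \<sigma> h st t) (R - {t}))"
| succ_done:
    "astar_step ts \<sigma> h reeval (Succ st {}) (Loop st)"
| unsolvable: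
    "opn st = {#} \<Longrightarrow> astar_step ts \<sigma> h reeval (Loop st) (Ret Unsolvable)"

definition dyn_astar_returns :: "('s,'l) tsys \<Rightarrow> ('s,'l,'i) info_source \<Rightarrow> ('s \<Rightarrow> 'i \<Rightarrow> ennreal)
    \<Rightarrow> bool \<Rightarrow> ('s,'l) result \<Rightarrow> bool" where
  "dyn_astar_returns ts \<sigma> h reeval r \<longleftrightarrow> (astar_step ts \<sigma> h reeval)\<^sup>*\<^sup>* (astar_init ts \<sigma> h) (Ret r)"

end

theory Submission
  imports Defs
begin

lemma p_update_cases:
  assumes "\<iota> s = Some (g, pp)"
  shows "(p_update ts \<iota> (s,l,s') = \<iota> \<and> s' \<in> dom \<iota> \<and> gval \<iota> s' < g + cst ts l) \<or>
         (p_update ts \<iota> (s,l,s') = \<iota>(s' \<mapsto> (g + cst ts l, Some (s,l,s'))) \<and> (s' \<in> dom \<iota> \<longrightarrow> g + cst ts l \<le> gval \<iota> s'))"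
  using assms by (auto simp: p_update_def gval_def split: option.splits prod.splits)

lemma is_path_append: "is_path ts s (p @ q) s'' \<longleftrightarrow> (\<exists>s'. is_path ts s p s' \<and> is_path ts s' q s'')"
  by (induction p arbitrary: s) auto

lemma path_cost_append: "path_cost ts (p @ q) = path_cost ts p + path_cost ts q"
  by (simp add: path_cost_def)

lemma path_cost_Cons: "path_cost ts ((a,l,b) # q) = cst ts l + path_cost ts q"
  by (simp add: path_cost_def)

lemma path_cost_nonneg: "ts_wf ts \<Longrightarrow> is_path ts s q s' \<Longrightarrow> 0 \<le> path_cost ts q"
proof (induction q arbitrary: s)
  case Nil then show ?case by (simp add: path_cost_def)
next
  case (Cons t q)
  obtain a l b where t: "t = (a,l,b)" by (cases t) auto
  have "t \<in> Tr ts" using Cons by simp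
  then have "l \<in> Lb ts" using Cons.prems(1) t by (auto simp: ts_wf_def)
  then have "0 \<le> cst ts l" using Cons.prems(1) by (auto simp: ts_wf_def)
  moreover have "0 \<le> path_cost ts q" using Cons t by auto
  ultimately show ?case by (simp add: t path_cost_Cons)
qed

lemma hstar_le: "goal_path ts s q \<Longrightarrow> hstar ts s \<le> ennreal (path_cost ts q)"
  unfolding hstar_def by (rule INF_lower2[of q]) auto


definition ainv :: "('s,'l) tsys \<Rightarrow> ('s,'l,'i) astate \<Rightarrow> ('s,'l) trans set \<Rightarrow> bool" where
  "ainv ts st R \<longleftrightarrow>
    dom (Ip st) = known st \<and> known st \<subseteq> St ts \<and> closed st \<subseteq> known st \<and> closed st \<inter> SG ts = {} \<and>
    sI ts \<in> known st \<and> gval (Ip st) (sI ts) = 0 \<and> (\<forall>x\<in>known st. 0 \<le> gval (Ip st) x) \<and>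
    (\<forall>x u l g. Ip st x = Some (g, Some (u,l,x)) \<longrightarrow> (u,l,x) \<in> Tr ts \<and> u \<in> known st \<and> gval (Ip st) u + cst ts l \<le> g) \<and>
    (\<forall>e\<in>#opn st. fst e \<in> known st \<and> gval (Ip st) (fst e) \<le> fst (snd e) \<and> snd (snd e) \<le> hstar ts (fst e)) \<and>
    (\<forall>s\<in>known st - closed st. hstar ts s < top \<longrightarrow> (\<exists>hh. (s, gval (Ip st) s, hh) \<in># opn st)) \<and>
    (\<forall>s\<in>closed st. hstar ts s < top \<longrightarrow> (\<forall>t\<in>Tr ts. fst t = s \<longrightarrow> t \<notin> R \<longrightarrow>
        snd (snd t) \<in> known st \<and> gval (Ip st) (snd (snd t)) \<le> gval (Ip st) s + cst ts (fst (snd t))))"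

lemma parent_path_ok:
  assumes "parent_path ts \<iota> s p"
    and P: "\<forall>x u l g. \<iota> x = Some (g, Some (u,l,x)) \<longrightarrow> (u,l,x) \<in> Tr ts \<and> gval \<iota> u + cst ts l \<le> g"
  shows "is_path ts (sI ts) p s \<and> path_cost ts p + gval \<iota> (sI ts) \<le> gval \<iota> s"
  using assms(1)
proof induction
  case pp_init then show ?case by (simp add: path_cost_def)
next
  case (pp_step s g u l p)
  have "(u,l,s) \<in> Tr ts" "gval \<iota> u + cst ts l \<le> g" using P pp_step.hyps(2) by blast+
  moreover have "gval \<iota> s = g" using pp_step.hyps(2) by (simp add: gval_def)
  ultimately show ?case using pp_step.IH by (auto simp: is_path_append path_cost_append path_cost_def)
qed

lemma key_bound:
  assumes I: "ainv ts st {}" and wf: "ts_wf ts"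
  shows "is_path ts s0 q g \<Longrightarrow> g \<in> SG ts \<Longrightarrow> s0 \<in> known st \<Longrightarrow> gval (Ip st) s0 \<le> a \<Longrightarrow>
     \<exists>e\<in>#opn st. ekey e \<le> ennreal (a + path_cost ts q)"
proof (induction q arbitrary: s0 a)
  case Nil
  then have s0: "s0 = g" by simp
  have nc: "s0 \<notin> closed st" using I Nil s0 by (auto simp: ainv_def)
  have gp: "goal_path ts s0 []" using Nil by (auto simp: goal_path_def)
  have hs: "hstar ts s0 \<le> 0" using hstar_le[OF gp] by (simp add: path_cost_def)
  then have "hstar ts s0 < top" by (simp add: top.not_eq_extremum)
  then obtain hh where e: "(s0, gval (Ip st) s0, hh) \<in># opn st" using I Nil nc unfolding ainv_def by blast
  then have "hh \<le> hstar ts s0" using I by (force simp: ainv_def)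
  with hs have "hh = 0" by simp
  then have "ekey (s0, gval (Ip st) s0, hh) \<le> ennreal (a + path_cost ts [])"
    using Nil by (simp add: ekey_def path_cost_def ennreal_leI)
  with e show ?case by blast
next
  case (Cons t q)
  obtain x l y where t: "t = (x,l,y)" by (cases t) auto
  have tT: "t \<in> Tr ts" and x: "x = s0" and yq: "is_path ts y q g" using Cons t by auto
  have cq: "0 \<le> path_cost ts q" using path_cost_nonneg[OF wf yq] .
  have c0: "0 \<le> cst ts l" using wf tT t by (auto simp: ts_wf_def)
  have gp: "goal_path ts s0 (t # q)" using Cons by (auto simp: goal_path_def)
  have hs: "hstar ts s0 \<le> ennreal (path_cost ts (t#q))" using hstar_le[OF gp] .
  then have hfin: "hstar ts s0 < top" using ennreal_less_top order.strict_trans1 by blast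
  have g0: "0 \<le> gval (Ip st) s0" using I Cons.prems by (auto simp: ainv_def)
  show ?case
  proof (cases "s0 \<in> closed st")
    case False
    then obtain hh where e: "(s0, gval (Ip st) s0, hh) \<in># opn st" using I Cons.prems hfin by (auto simp: ainv_def)
    then have "hh \<le> hstar ts s0" using I by (force simp: ainv_def)
    then have "hh \<le> ennreal (path_cost ts (t#q))" using hs by simp
    then have "ekey (s0, gval (Ip st) s0, hh) \<le> ennreal (gval (Ip st) s0) + ennreal (path_cost ts (t#q))"
      by (simp add: ekey_def add_left_mono)
    also have "\<dots> \<le> ennreal (a + path_cost ts (t#q))"
      using g0 Cons.prems(4) cq c0 by (simp add: t path_cost_Cons ennreal_plus[symmetric] ennreal_leI del: ennreal_plus)
    finally show ?thesis using e by blast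
  next
    case True
    then have "y \<in> known st \<and> gval (Ip st) y \<le> gval (Ip st) s0 + cst ts l"
    proof -
      have "\<forall>t\<in>Tr ts. fst t = s0 \<longrightarrow> t \<notin> {} \<longrightarrow>
        snd (snd t) \<in> known st \<and> gval (Ip st) (snd (snd t)) \<le> gval (Ip st) s0 + cst ts (fst (snd t))"
        using I hfin True unfolding ainv_def by blast
      then show ?thesis using tT t x by fastforce
    qed
    then have "y \<in> known st" "gval (Ip st) y \<le> a + cst ts l" using Cons.prems by auto
    from Cons.IH[OF yq Cons.prems(2) this] show ?thesis by (simp add: t path_cost_Cons add.assoc)
  qed
qed


lemma succ_pres:
  assumes hadm: "\<And>s i. s \<in> St ts \<Longrightarrow> h s i \<le> hstar ts s"
    and wf: "ts_wf ts"
    and I: "ainv ts st R" and tR: "t \<in> R" and tT: "t \<in> Tr ts" and tx: "fst t \<in> known st"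
  shows "ainv ts (succ_step ts \<sigma> h st t) (R - {t})"
proof -
  obtain x l y where t: "t = (x,l,y)" by (cases t) auto
  define \<iota> where "\<iota> = Ip st"
  have dom: "dom \<iota> = known st" using I by (simp add: ainv_def \<iota>_def)
  obtain gx pp where \<iota>x: "\<iota> x = Some (gx, pp)" using tx dom t by (cases "\<iota> x") auto
  have gx: "gval \<iota> x = gx" using \<iota>x by (simp add: gval_def)
  define \<iota>' where "\<iota>' = p_update ts \<iota> t"
  have c0: "0 \<le> cst ts l" using wf tT t by (auto simp: ts_wf_def)
  have yS: "y \<in> St ts" and xS: "x \<in> St ts" using wf tT t by (auto simp: ts_wf_def)
  define ih' where "ih' = iupdate \<sigma> (Ih st) t"
  define hv where "hv = h y ih'"
  have hv: "hv \<le> hstar ts y" using hadm[OF yS] by (simp add: hv_def)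
  have upd: "(\<iota>' = \<iota> \<and> y \<in> dom \<iota> \<and> gval \<iota> y < gx + cst ts l) \<or>
         (\<iota>' = \<iota>(y \<mapsto> (gx + cst ts l, Some (x,l,y))) \<and> (y \<in> dom \<iota> \<longrightarrow> gx + cst ts l \<le> gval \<iota> y))"
    unfolding \<iota>'_def t by (rule p_update_cases[of \<iota> x, OF \<iota>x])
  have dom': "dom \<iota>' = insert y (known st)" using upd unfolding dom[symmetric]
    by (elim disjE) (simp_all add: insert_absorb)
  have oth: "\<And>z. z \<noteq> y \<Longrightarrow> \<iota>' z = \<iota> z" using upd by auto
  have goth: "\<And>z. z \<noteq> y \<Longrightarrow> gval \<iota>' z = gval \<iota> z" using oth by (simp add: gval_def)
  have gy: "gval \<iota>' y \<le> gx + cst ts l" using upd by (auto simp: gval_def)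
  have gy2: "y \<in> known st \<Longrightarrow> gval \<iota>' y \<le> gval \<iota> y"
  proof -
    assume "y \<in> known st"
    then have "y \<in> dom \<iota>" using dom by simp
    from upd show ?thesis
    proof (elim disjE)
      assume "\<iota>' = \<iota>(y \<mapsto> (gx + cst ts l, Some (x,l,y))) \<and> (y \<in> dom \<iota> \<longrightarrow> gx + cst ts l \<le> gval \<iota> y)"
      then show ?thesis using \<open>y \<in> dom \<iota>\<close> by (simp add: gval_def)
    qed simp
  qed
  have gdec: "\<And>z. z \<in> known st \<Longrightarrow> gval \<iota>' z \<le> gval \<iota> z"
    using gy2 goth by (metis order_refl)
  have gxnn: "0 \<le> gx" using I tx t gx by (auto simp: ainv_def \<iota>_def)
  have gynn: "0 \<le> gval \<iota>' y"
    using upd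
  proof (elim disjE)
    assume "\<iota>' = \<iota> \<and> y \<in> dom \<iota> \<and> gval \<iota> y < gx + cst ts l"
    then show ?thesis using I dom by (auto simp: ainv_def \<iota>_def)
  next
    assume "\<iota>' = \<iota>(y \<mapsto> (gx + cst ts l, Some (x,l,y))) \<and> (y \<in> dom \<iota> \<longrightarrow> gx + cst ts l \<le> gval \<iota> y)"
    then show ?thesis using gxnn c0 by (simp add: gval_def)
  qed
  define st0 where "st0 = st\<lparr>Ip := \<iota>', Ih := ih', known := insert y (known st)\<rparr>"
  have ss: "succ_step ts \<sigma> h st t =
     (if hv = top then st0 else if y \<in> known st then
        (if gval \<iota> y > gval \<iota>' y then st0\<lparr>closed := closed st0 - {y}, opn := opn st0 + {#(y, gval \<iota>' y, hv)#}\<rparr> else st0)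
      else st0\<lparr>opn := opn st0 + {#(y, gval \<iota>' y, hv)#}\<rparr>)"
    unfolding succ_step_def Let_def t st0_def hv_def ih'_def \<iota>'_def \<iota>_def sigma_p_def
    by (simp add: t)
  have gtop: "hstar ts y < top \<Longrightarrow> hv \<noteq> top" using hv by (auto simp: top_unique)
  obtain cl op where st': "succ_step ts \<sigma> h st t = st0\<lparr>closed := cl, opn := op\<rparr>"
    and cs: "(cl = closed st \<and> op = opn st \<and> (hv = top \<or> (y \<in> known st \<and> gval \<iota>' y = gval \<iota> y))) \<or>
       (cl = closed st - {y} \<and> op = opn st + {#(y, gval \<iota>' y, hv)#} \<and> hv \<noteq> top) \<or>
       (cl = closed st \<and> op = opn st + {#(y, gval \<iota>' y, hv)#} \<and> hv \<noteq> top \<and> y \<notin> known st)"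
  proof -
    have st0c: "closed st0 = closed st" "opn st0 = opn st" by (simp_all add: st0_def)
    show ?thesis
    proof (cases "hv = top")
      case True
      then show ?thesis using that[where cl="closed st" and op="opn st"] ss by (simp add: st0c[symmetric])
    next
      case hf: False
      show ?thesis
      proof (cases "y \<in> known st")
        case True
        show ?thesis
        proof (cases "gval \<iota> y > gval \<iota>' y")
          case True
          then show ?thesis using that[where cl="closed st - {y}" and op="opn st + {#(y, gval \<iota>' y, hv)#}"] ss hf \<open>y \<in> known st\<close>
            by (simp add: st0c)
        next
          case False
          then have "gval \<iota>' y = gval \<iota> y" using gy2 True by simp
          then show ?thesis using that[where cl="closed st" and op="opn st"] ss hf True False by (simp add: st0c[symmetric])
        qed
      next
        case False
        then show ?thesis using that[where cl="closed st" and op="opn st + {#(y, gval \<iota>' y, hv)#}"] ss hf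
          by (simp add: st0c)
      qed
    qed
  qed
  have clsub: "closed st - {y} \<subseteq> cl" "cl \<subseteq> closed st" using cs by auto
  have opmem: "\<And>e. e \<in># opn st \<Longrightarrow> e \<in># op" using cs by auto
  have opc: "op = opn st \<or> op = opn st + {#(y, gval \<iota>' y, hv)#}" using cs by auto
  have Pold: "\<forall>z u l' g. \<iota> z = Some (g, Some (u,l',z)) \<longrightarrow> (u,l',z) \<in> Tr ts \<and> u \<in> known st \<and> gval \<iota> u + cst ts l' \<le> g"
    using I by (simp add: ainv_def \<iota>_def)
  have Hold: "\<forall>e\<in>#opn st. fst e \<in> known st \<and> gval \<iota> (fst e) \<le> fst (snd e) \<and> snd (snd e) \<le> hstar ts (fst e)"
    using I by (simp add: ainv_def \<iota>_def)
  have Jold: "\<forall>s\<in>known st - closed st. hstar ts s < top \<longrightarrow> (\<exists>hh. (s, gval \<iota> s, hh) \<in># opn st)"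
    using I by (simp add: ainv_def \<iota>_def)
  have Kold: "\<forall>s\<in>closed st. hstar ts s < top \<longrightarrow> (\<forall>t\<in>Tr ts. fst t = s \<longrightarrow> t \<notin> R \<longrightarrow>
        snd (snd t) \<in> known st \<and> gval \<iota> (snd (snd t)) \<le> gval \<iota> s + cst ts (fst (snd t)))"
    using I by (simp add: ainv_def \<iota>_def)
  have misc: "known st \<subseteq> St ts" "closed st \<subseteq> known st" "closed st \<inter> SG ts = {}" "sI ts \<in> known st"
    "gval \<iota> (sI ts) = 0" "\<forall>x\<in>known st. 0 \<le> gval \<iota> x"
    using I by (simp_all add: ainv_def \<iota>_def)
  have nn': "\<forall>z\<in>insert y (known st). 0 \<le> gval \<iota>' z" using gynn goth misc(6) by (metis insert_iff)
  have sI': "gval \<iota>' (sI ts) = 0" using gdec[OF misc(4)] misc(5) nn' misc(4) by fastforce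
  have P': "\<forall>z u l' g. \<iota>' z = Some (g, Some (u,l',z)) \<longrightarrow> (u,l',z) \<in> Tr ts \<and> u \<in> insert y (known st) \<and> gval \<iota>' u + cst ts l' \<le> g"
  proof (intro allI impI)
    fix z u l' g assume z: "\<iota>' z = Some (g, Some (u,l',z))"
    show "(u,l',z) \<in> Tr ts \<and> u \<in> insert y (known st) \<and> gval \<iota>' u + cst ts l' \<le> g"
    proof (cases "\<iota>' z = \<iota> z")
      case True
      then have "(u,l',z) \<in> Tr ts \<and> u \<in> known st \<and> gval \<iota> u + cst ts l' \<le> g" using Pold z by (metis)
      then show ?thesis using gdec by force
    next
      case False
      then have zy: "z = y" using oth by blast
      then have "\<iota>' = \<iota>(y \<mapsto> (gx + cst ts l, Some (x,l,y)))" using upd False by auto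
      then have "g = gx + cst ts l" "u = x" "l' = l" using z zy by auto
      then show ?thesis using gdec[of x] tx t gx tT zy by auto
    qed
  qed
  have H': "\<forall>e\<in>#op. fst e \<in> insert y (known st) \<and> gval \<iota>' (fst e) \<le> fst (snd e) \<and> snd (snd e) \<le> hstar ts (fst e)"
  proof
    fix e assume e: "e \<in># op"
    show "fst e \<in> insert y (known st) \<and> gval \<iota>' (fst e) \<le> fst (snd e) \<and> snd (snd e) \<le> hstar ts (fst e)"
    proof (cases "e \<in># opn st")
      case True
      then show ?thesis using Hold gdec by (meson insertCI order_trans)
    next
      case False
      then have "e = (y, gval \<iota>' y, hv)" using opc e by auto
      then show ?thesis using hv by simp
    qed
  qed
  have J': "\<forall>s\<in>insert y (known st) - cl. hstar ts s < top \<longrightarrow> (\<exists>hh. (s, gval \<iota>' s, hh) \<in># op)"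
  proof (intro ballI impI)
    fix s assume s: "s \<in> insert y (known st) - cl" and hs: "hstar ts s < top"
    show "\<exists>hh. (s, gval \<iota>' s, hh) \<in># op"
    proof (cases "s = y")
      case True
      then have hvf: "hv \<noteq> top" using gtop hs by simp
      show ?thesis
      proof (cases "op = opn st")
        case False
        then show ?thesis using opc True by auto
      next
        case opeq: True
        then have "cl = closed st" "y \<in> known st" "gval \<iota>' y = gval \<iota> y" using cs hvf by auto
        then show ?thesis using Jold s True hs opeq by auto
      qed
    next
      case False
      then have "s \<in> known st - closed st" using s clsub by auto
      then show ?thesis using Jold hs goth[OF False] opmem by metis
    qed
  qed
  have gcl: "\<And>s. s \<in> cl \<Longrightarrow> hstar ts s < top \<Longrightarrow> gval \<iota>' s = gval \<iota> s"
  proof -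
    fix s assume s: "s \<in> cl" and hs: "hstar ts s < top"
    show "gval \<iota>' s = gval \<iota> s"
    proof (cases "s = y")
      case True
      then have "hv \<noteq> top" using gtop hs by simp
      then show ?thesis using cs s True misc(2) by auto
    qed (rule goth)
  qed
  have K': "\<forall>s\<in>cl. hstar ts s < top \<longrightarrow> (\<forall>t'\<in>Tr ts. fst t' = s \<longrightarrow> t' \<notin> R - {t} \<longrightarrow>
        snd (snd t') \<in> insert y (known st) \<and> gval \<iota>' (snd (snd t')) \<le> gval \<iota>' s + cst ts (fst (snd t')))"
  proof (intro ballI impI)
    fix s t' assume s: "s \<in> cl" and hs: "hstar ts s < top" and t'T: "t' \<in> Tr ts" and t's: "fst t' = s"
      and t'R: "t' \<notin> R - {t}"
    show "snd (snd t') \<in> insert y (known st) \<and> gval \<iota>' (snd (snd t')) \<le> gval \<iota>' s + cst ts (fst (snd t'))"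
    proof (cases "t' = t")
      case True
      then have sx: "s = x" using t t's by simp
      show ?thesis
      proof (cases "x = y")
        case True
        then show ?thesis using \<open>t' = t\<close> t c0 sx by simp
      next
        case False
        then show ?thesis using \<open>t' = t\<close> t sx gy goth[of x] gx by simp
      qed
    next
      case False
      then have "t' \<notin> R" using t'R by simp
      then have "snd (snd t') \<in> known st \<and> gval \<iota> (snd (snd t')) \<le> gval \<iota> s + cst ts (fst (snd t'))"
        using Kold s clsub hs t'T t's by blast
      then show ?thesis using gdec[of "snd (snd t')"] gcl[OF s hs] by force
    qed
  qed
  have cl1: "cl \<subseteq> insert y (known st)" "cl \<inter> SG ts = {}" using clsub misc by auto
  show ?thesis unfolding st' ainv_def
    using dom' yS misc cl1 P' H' J' K' nn' sI' by (simp add: st0_def)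
qed


definition cinv :: "('s,'l) tsys \<Rightarrow> ('s,'l,'i) conf \<Rightarrow> bool" where
  "cinv ts c = (case c of Loop st \<Rightarrow> ainv ts st {}
     | Succ st R \<Rightarrow> ainv ts st R \<and> (\<forall>t\<in>R. t \<in> Tr ts \<and> fst t \<in> known st)
     | Ret r \<Rightarrow> (case r of Solution p \<Rightarrow> is_solution ts p \<and> (\<forall>q. is_solution ts q \<longrightarrow> path_cost ts p \<le> path_cost ts q)
                 | Unsolvable \<Rightarrow> True))"

lemma known_succ_step: "known (succ_step ts \<sigma> h st t) = insert (snd (snd t)) (known st)"
  by (simp add: succ_step_def Let_def)

lemma init_inv:
  assumes hadm: "\<And>s i. s \<in> St ts \<Longrightarrow> h s i \<le> hstar ts s" and wf: "ts_wf ts"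
  shows "cinv ts (astar_init ts \<sigma> h)"
proof -
  have sS: "sI ts \<in> St ts" using wf by (simp add: ts_wf_def)
  have g0: "gval (p_init ts) (sI ts) = 0" by (simp add: gval_def p_init_def)
  have hh: "h (sI ts) (iinit \<sigma>) \<le> hstar ts (sI ts)" using hadm[OF sS] .
  have J: "hstar ts (sI ts) < top \<Longrightarrow> h (sI ts) (iinit \<sigma>) < top" using hh by (meson order.strict_trans1)
  show ?thesis
    unfolding cinv_def astar_init_def ainv_def
    using sS g0 hh J by (auto simp: sigma_p_def p_init_def gval_def)
qed

lemma mem_diff_single: "x \<noteq> e \<Longrightarrow> x \<in># M \<Longrightarrow> x \<in># M - {#e#}"
  by (simp add: in_diff_count)

lemma inv_pop_closed:
  assumes I: "ainv ts st {}" and c: "fst e \<in> closed st"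
  shows "ainv ts (st\<lparr>opn := opn st - {#e#}\<rparr>) {}"
proof -
  have J: "\<forall>s\<in>known st - closed st. hstar ts s < top \<longrightarrow> (\<exists>hh. (s, gval (Ip st) s, hh) \<in># opn st - {#e#})"
  proof (intro ballI impI)
    fix s assume s: "s \<in> known st - closed st" "hstar ts s < top"
    then obtain hh where hh: "(s, gval (Ip st) s, hh) \<in># opn st" using I unfolding ainv_def by blast
    have ne: "(s, gval (Ip st) s, hh) \<noteq> e"
    proof
      assume "(s, gval (Ip st) s, hh) = e"
      then have "fst e = s" by auto
      with s c show False by simp
    qed
    show "\<exists>hh. (s, gval (Ip st) s, hh) \<in># opn st - {#e#}" using mem_diff_single[OF ne hh] by blast
  qed
  have H: "\<And>e'. e' \<in># opn st - {#e#} \<Longrightarrow> e' \<in># opn st" by (meson in_diffD)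
  have H2: "\<forall>e'\<in>#opn st - {#e#}. fst e' \<in> known st \<and> gval (Ip st) (fst e') \<le> fst (snd e') \<and> snd (snd e') \<le> hstar ts (fst e')"
    using I H unfolding ainv_def by blast
  show ?thesis using I J H2 unfolding ainv_def by simp
qed


lemma inv_reeval:
  assumes I: "ainv ts st {}" and e: "e = (s, g0, h0)" "e \<in># opn st" and nc: "s \<notin> closed st"
    and hle: "hv \<le> hstar ts s"
  shows "ainv ts (st\<lparr>Ih := ih', opn := opn st - {#e#} + (if hv < top then {#(s, gval (Ip st) s, hv)#} else {#})\<rparr>) {}"
proof -
  define new where "new = (if hv < top then {#(s, gval (Ip st) s, hv)#} else {#})"
  have sk: "s \<in> known st" using I e unfolding ainv_def by fastforce
  have J: "\<forall>s'\<in>known st - closed st. hstar ts s' < top \<longrightarrow> (\<exists>hh. (s', gval (Ip st) s', hh) \<in># opn st - {#e#} + new)"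
  proof (intro ballI impI)
    fix s' assume s': "s' \<in> known st - closed st" and hs': "hstar ts s' < top"
    show "\<exists>hh. (s', gval (Ip st) s', hh) \<in># opn st - {#e#} + new"
    proof (cases "s' = s")
      case True
      then have "hv < top" using hs' hle by (meson order.strict_trans1)
      then have "(s, gval (Ip st) s, hv) \<in># new" by (simp add: new_def)
      then show ?thesis using True by (metis union_iff)
    next
      case False
      obtain hh where hh: "(s', gval (Ip st) s', hh) \<in># opn st" using I s' hs' unfolding ainv_def by blast
      have ne: "(s', gval (Ip st) s', hh) \<noteq> e" using False e(1) by simp
      show ?thesis using mem_diff_single[OF ne hh] by (metis union_iff)
    qed
  qed
  have H: "\<forall>e'\<in>#opn st - {#e#} + new. fst e' \<in> known st \<and> gval (Ip st) (fst e') \<le> fst (snd e') \<and> snd (snd e') \<le> hstar ts (fst e')"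
  proof
    fix e' assume "e' \<in># opn st - {#e#} + new"
    then have "e' \<in># opn st \<or> e' \<in># new" by (meson in_diffD union_iff)
    then show "fst e' \<in> known st \<and> gval (Ip st) (fst e') \<le> fst (snd e') \<and> snd (snd e') \<le> hstar ts (fst e')"
    proof
      assume "e' \<in># new"
      then have "e' = (s, gval (Ip st) s, hv)" by (simp add: new_def split: if_splits)
      then show ?thesis using sk hle by simp
    next
      assume "e' \<in># opn st"
      then show ?thesis using I unfolding ainv_def by blast
    qed
  qed
  have rest: "dom (Ip st) = known st \<and> known st \<subseteq> St ts \<and> closed st \<subseteq> known st \<and> closed st \<inter> SG ts = {} \<and>
    sI ts \<in> known st \<and> gval (Ip st) (sI ts) = 0 \<and> (\<forall>x\<in>known st. 0 \<le> gval (Ip st) x) \<and>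
    (\<forall>x u l g. Ip st x = Some (g, Some (u,l,x)) \<longrightarrow> (u,l,x) \<in> Tr ts \<and> u \<in> known st \<and> gval (Ip st) u + cst ts l \<le> g) \<and>
    (\<forall>s\<in>closed st. hstar ts s < top \<longrightarrow> (\<forall>t\<in>Tr ts. fst t = s \<longrightarrow> t \<notin> {} \<longrightarrow>
        snd (snd t) \<in> known st \<and> gval (Ip st) (snd (snd t)) \<le> gval (Ip st) s + cst ts (fst (snd t))))"
    using I unfolding ainv_def by blast
  show ?thesis unfolding ainv_def new_def[symmetric] using rest J H by simp
qed

lemma inv_expand:
  assumes I: "ainv ts st {}" and e: "e = (s, g0, h0)" "e \<in># opn st" and nc: "s \<notin> closed st"
    and ng: "s \<notin> SG ts"
  shows "ainv ts (st\<lparr>Ih := ih', closed := insert s (closed st), opn := opn st - {#e#}\<rparr>) {t \<in> Tr ts. fst t = s}"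
    and "s \<in> known st"
proof -
  show sk: "s \<in> known st" using I e unfolding ainv_def by fastforce
  have J: "\<forall>s'\<in>known st - insert s (closed st). hstar ts s' < top \<longrightarrow> (\<exists>hh. (s', gval (Ip st) s', hh) \<in># opn st - {#e#})"
  proof (intro ballI impI)
    fix s' assume s': "s' \<in> known st - insert s (closed st)" and hs': "hstar ts s' < top"
    then have s'': "s' \<in> known st - closed st" "s' \<noteq> s" by blast+
    obtain hh where hh: "(s', gval (Ip st) s', hh) \<in># opn st" using I s'' hs' unfolding ainv_def by blast
    have ne: "(s', gval (Ip st) s', hh) \<noteq> e" using s''(2) e(1) by simp
    show "\<exists>hh. (s', gval (Ip st) s', hh) \<in># opn st - {#e#}" using mem_diff_single[OF ne hh] by blast
  qed
  have H: "\<forall>e'\<in>#opn st - {#e#}. fst e' \<in> known st \<and> gval (Ip st) (fst e') \<le> fst (snd e') \<and> snd (snd e') \<le> hstar ts (fst e')"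
    using I in_diffD unfolding ainv_def by metis
  have K: "\<forall>s'\<in>insert s (closed st). hstar ts s' < top \<longrightarrow> (\<forall>t\<in>Tr ts. fst t = s' \<longrightarrow> t \<notin> {t \<in> Tr ts. fst t = s} \<longrightarrow>
        snd (snd t) \<in> known st \<and> gval (Ip st) (snd (snd t)) \<le> gval (Ip st) s' + cst ts (fst (snd t)))"
  proof (intro ballI impI)
    fix s' t assume s': "s' \<in> insert s (closed st)" and hs: "hstar ts s' < top" and tT: "t \<in> Tr ts" and ts': "fst t = s'"
      and tn: "t \<notin> {t \<in> Tr ts. fst t = s}"
    then have "s' \<noteq> s" by blast
    then have "s' \<in> closed st" using s' by blast
    then show "snd (snd t) \<in> known st \<and> gval (Ip st) (snd (snd t)) \<le> gval (Ip st) s' + cst ts (fst (snd t))"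
      using I hs tT ts' unfolding ainv_def by blast
  qed
  have rest: "dom (Ip st) = known st \<and> known st \<subseteq> St ts \<and> closed st \<subseteq> known st \<and> closed st \<inter> SG ts = {} \<and>
    sI ts \<in> known st \<and> gval (Ip st) (sI ts) = 0 \<and> (\<forall>x\<in>known st. 0 \<le> gval (Ip st) x) \<and>
    (\<forall>x u l g. Ip st x = Some (g, Some (u,l,x)) \<longrightarrow> (u,l,x) \<in> Tr ts \<and> u \<in> known st \<and> gval (Ip st) u + cst ts l \<le> g)"
    using I unfolding ainv_def by blast
  have cl: "insert s (closed st) \<subseteq> known st" "insert s (closed st) \<inter> SG ts = {}" using rest sk ng by blast+
  show "ainv ts (st\<lparr>Ih := ih', closed := insert s (closed st), opn := opn st - {#e#}\<rparr>) {t \<in> Tr ts. fst t = s}"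
    unfolding ainv_def using rest cl J H K by simp
qed


lemma step_inv:
  assumes hadm: "\<And>s i. s \<in> St ts \<Longrightarrow> h s i \<le> hstar ts s" and wf: "ts_wf ts"
  shows "astar_step ts \<sigma> h reeval c c' \<Longrightarrow> cinv ts c \<Longrightarrow> cinv ts c'"
proof (induction rule: astar_step.induct)
  case (pop_closed e st)
  then have I: "ainv ts st {}" by (simp add: cinv_def)
  show ?case using inv_pop_closed[OF I pop_closed.hyps(3)] by (simp add: cinv_def)
next
  case (reevaluate e s g0 h0 st ip' ih')
  then have I: "ainv ts st {}" by (simp add: cinv_def)
  have ip': "ip' = Ip st" using reevaluate.hyps by (simp add: sigma_p_def p_refine_def)
  have sk: "s \<in> known st" using I reevaluate.hyps(1,2) unfolding ainv_def by fastforce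
  then have sS: "s \<in> St ts" using I unfolding ainv_def by blast
  have hle: "h s ih' \<le> hstar ts s" using hadm[OF sS] .
  have "ainv ts (st\<lparr>Ih := ih', opn := opn st - {#e#} + (if h s ih' < top then {#(s, gval (Ip st) s, h s ih')#} else {#})\<rparr>) {}"
    by (rule inv_reeval[OF I reevaluate.hyps(1,2,4) hle])
  moreover have "\<And>X. st\<lparr>Ip := Ip st, Ih := ih', opn := X\<rparr> = st\<lparr>Ih := ih', opn := X\<rparr>" by (cases st) simp
  ultimately show ?case unfolding cinv_def ip' by (simp only: conf.case)
next
  case (expand_goal e s g0 h0 st ip' ih' p)
  then have I: "ainv ts st {}" by (simp add: cinv_def)
  have ip': "ip' = Ip st" using expand_goal.hyps by (simp add: sigma_p_def p_refine_def)
  have P: "\<forall>x u l g. Ip st x = Some (g, Some (u,l,x)) \<longrightarrow> (u,l,x) \<in> Tr ts \<and> gval (Ip st) u + cst ts l \<le> g"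
    using I unfolding ainv_def by blast
  have pp: "is_path ts (sI ts) p s \<and> path_cost ts p + gval (Ip st) (sI ts) \<le> gval (Ip st) s"
    using parent_path_ok[OF _ P] expand_goal.hyps(9) ip' by simp
  have sol: "is_solution ts p" using pp expand_goal.hyps(8) unfolding is_solution_def goal_path_def by blast
  have gs: "gval (Ip st) s \<le> g0" using I expand_goal.hyps(1,2) unfolding ainv_def by fastforce
  have gI: "gval (Ip st) (sI ts) = 0" "sI ts \<in> known st" using I unfolding ainv_def by blast+
  have cp: "path_cost ts p \<le> g0" using pp gs gI by simp
  have opt: "path_cost ts p \<le> path_cost ts q" if q: "is_solution ts q" for q
  proof -
    obtain g where g: "g \<in> SG ts" "is_path ts (sI ts) q g" using q unfolding is_solution_def goal_path_def by blast
    have "gval (Ip st) (sI ts) \<le> 0" using gI by simp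
    from key_bound[OF I wf g(2) g(1) gI(2) this] obtain e' where e': "e' \<in># opn st" "ekey e' \<le> ennreal (path_cost ts q)"
      by auto
    have "ennreal (path_cost ts p) \<le> ennreal g0" using cp by (rule ennreal_leI)
    also have "\<dots> \<le> ekey e" using expand_goal.hyps(1) by (simp add: ekey_def)
    also have "\<dots> \<le> ekey e'" using expand_goal.hyps(3) e'(1) by blast
    also have "\<dots> \<le> ennreal (path_cost ts q)" using e'(2) .
    finally show ?thesis using path_cost_nonneg[OF wf g(2)] by (simp add: ennreal_le_iff)
  qed
  show ?case using sol opt by (simp add: cinv_def)
next
  case (expand e s g0 h0 st ip' ih')
  then have I: "ainv ts st {}" by (simp add: cinv_def)
  have ip': "ip' = Ip st" using expand.hyps by (simp add: sigma_p_def p_refine_def)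
  note X1 = inv_expand(1)[OF I expand.hyps(1,2,4,8), of ih']
  note X2 = inv_expand(2)[OF I expand.hyps(1,2,4,8)]
  have R: "\<forall>t\<in>{t \<in> Tr ts. fst t = s}. t \<in> Tr ts \<and> fst t \<in> known st" using X2 by blast
  have req: "st\<lparr>Ip := Ip st, Ih := ih', closed := insert s (closed st), opn := opn st - {#e#}\<rparr> =
        st\<lparr>Ih := ih', closed := insert s (closed st), opn := opn st - {#e#}\<rparr>" by (cases st) simp
  have A: "ainv ts (st\<lparr>Ip := Ip st, Ih := ih', closed := insert s (closed st), opn := opn st - {#e#}\<rparr>) {t \<in> Tr ts. fst t = s}"
    unfolding req by (rule X1)
  have R': "\<forall>t\<in>{t \<in> Tr ts. fst t = s}. t \<in> Tr ts \<and> fst t \<in> known (st\<lparr>Ip := Ip st, Ih := ih', closed := insert s (closed st), opn := opn st - {#e#}\<rparr>)"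
    using R by simp
  show ?case unfolding cinv_def ip' conf.case using A R' by (rule conjI)
next
  case (succ t R st)
  then have I: "ainv ts st R" and R: "\<forall>t\<in>R. t \<in> Tr ts \<and> fst t \<in> known st" by (simp_all add: cinv_def)
  have "ainv ts (succ_step ts \<sigma> h st t) (R - {t})"
    using succ_pres[where h=h and \<sigma>=\<sigma>, OF hadm wf I succ.hyps] R succ.hyps by blast
  moreover have "\<forall>t'\<in>R - {t}. t' \<in> Tr ts \<and> fst t' \<in> known (succ_step ts \<sigma> h st t)"
    using R unfolding known_succ_step by blast
  ultimately show ?case by (simp add: cinv_def)
next
  case (succ_done st)
  then show ?case by (simp add: cinv_def)
next
  case (unsolvable st)
  then show ?case by (simp add: cinv_def)
qed

lemma reach_inv:
  assumes hadm: "\<And>s i. s \<in> St ts \<Longrightarrow> h s i \<le> hstar ts s" and wf: "ts_wf ts"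
    and r: "(astar_step ts \<sigma> h reeval)\<^sup>*\<^sup>* (astar_init ts \<sigma> h) c"
  shows "cinv ts c"
  using r
proof induction
  case base then show ?case by (rule init_inv[OF hadm wf])
next
  case (step b c) then show ?case using step_inv[where h=h and ts=ts, OF hadm wf] by blast
qed

theorem theorem11:
  fixes ts :: "('s,'l) tsys" and hC hA :: "'s \<Rightarrow> ennreal" and p :: "('s,'l) trans list"
  assumes "ts_wf ts"
    and "admissible ts hC" and "admissible ts hA"
    and "dyn_astar_returns ts sigma_lazy (h_lazy hC hA) True (Solution p)"
  shows "is_solution ts p \<and> (\<forall>q. is_solution ts q \<longrightarrow> path_cost ts p \<le> path_cost ts q)"
proof -
  have hadm: "\<And>s i. s \<in> St ts \<Longrightarrow> h_lazy hC hA s i \<le> hstar ts s"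
  proof -
    fix s i assume "s \<in> St ts"
    then show "h_lazy hC hA s i \<le> hstar ts s" using assms(2,3)
      by (cases "i s") (simp_all add: h_lazy_def admissible_def)
  qed
  have "cinv ts (Ret (Solution p) :: ('s,'l,'s \<Rightarrow> lazy_tag) conf)"
    using reach_inv[where h="h_lazy hC hA" and ts=ts and \<sigma>=sigma_lazy and reeval=True, OF hadm assms(1)] assms(4) unfolding dyn_astar_returns_def by blast
  then show ?thesis by (simp add: cinv_def)
qed

end
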